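(* Let $z^{(0)}\in\mathbb C^m$ with $z^{(0)}_1\cdots z^{(0)}_m R(z^{(0)})\ne0$, and let $\bar M_1,\dots,\bar M_m\in\mathbb C[\xi_1,\dots,\xi_m]$ be the polynomials obtained by substituting $z=z^{(0)}$ in $M_1,\dots,M_m$. Then (1) $\bar M_1,\dots,\bar M_m$ form a regular sequence in $\mathbb C[\xi_1,\dots,\xi_m]$; in particular multiplication by $\bar M_m$ on $\mathbb C[\xi]/(\bar M_1,\dots,\bar M_{m-1})$ is injective and homogeneous of degree $p$; (2) the degree-$d$ part of $\mathbb C[\xi]/(\bar M_1,\dots,\bar M_{m-1})$ has dimension $r_{m-1,d}$, where $\sum_{d\ge0}r_{m-1,d}t^d=\frac{(1-t^p)^{m-1}}{(1-t)^m}$.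
   Context: $R(z)=\prod_{(i_1,\dots,i_m)\in\{1,\dots,p\}^m}(1-\zeta_p^{i_1}z_1-\cdots-\zeta_p^{i_m}z_m)$, $\zeta_p=e^{2\pi\sqrt{-1}/p}$. $M_k=\xi_k^p-\xi_m^p$ for $1\le k\le m-1$ and $M_m=\xi_m^p-\big(\sum_{j=1}^m z_j\xi_j\big)^p$. *)

theory Defs
  imports Complex_Main "HOL-Library.Poly_Mapping" "HOL-Library.FuncSet"
    "HOL-Computational_Algebra.Formal_Power_Series"
begin

text \<open>Variable xi_(i+1) of the paper is index i (0-based), i < m.\<close>

type_synonym cpoly = "(nat \<Rightarrow>\<^sub>0 nat) \<Rightarrow>\<^sub>0 complex"

definition pvar :: "nat \<Rightarrow> cpoly" where
  "pvar i = Poly_Mapping.single (Poly_Mapping.single i 1) 1"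

definition pconst :: "complex \<Rightarrow> cpoly" where
  "pconst c = Poly_Mapping.single 0 c"

definition cscale :: "complex \<Rightarrow> cpoly \<Rightarrow> cpoly" where
  "cscale c f = Poly_Mapping.map (\<lambda>x. c * x) f"

definition in_vars :: "nat \<Rightarrow> cpoly \<Rightarrow> bool" where
  "in_vars m f \<longleftrightarrow> (\<forall>\<alpha>::nat \<Rightarrow>\<^sub>0 nat\<in>Poly_Mapping.keys f. Poly_Mapping.keys \<alpha> \<subseteq> {..<m})"

definition mdeg :: "(nat \<Rightarrow>\<^sub>0 nat) \<Rightarrow> nat" where
  "mdeg \<alpha> = (\<Sum>i\<in>Poly_Mapping.keys \<alpha>. Poly_Mapping.lookup \<alpha> i)"

text \<open>Homogeneous of degree d (the zero polynomial counts as homogeneous of every degree).\<close>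
definition homog :: "nat \<Rightarrow> cpoly \<Rightarrow> bool" where
  "homog d f \<longleftrightarrow> (\<forall>\<alpha>\<in>Poly_Mapping.keys f. mdeg \<alpha> = d)"

definition gen_ideal :: "nat \<Rightarrow> cpoly list \<Rightarrow> cpoly set" where
  "gen_ideal m gs = {f. \<exists>h. (\<forall>i<length gs. in_vars m (h i)) \<and>
                          f = (\<Sum>i<length gs. h i * gs ! i)}"

definition regular_sequence :: "nat \<Rightarrow> cpoly list \<Rightarrow> bool" where
  "regular_sequence m gs \<longleftrightarrow>
     (\<forall>k<length gs. \<forall>f. in_vars m f \<and> f * gs ! k \<in> gen_ideal m (take k gs)
                         \<longrightarrow> f \<in> gen_ideal m (take k gs))
     \<and> 1 \<notin> gen_ideal m gs"

definition zeta :: "nat \<Rightarrow> complex" where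
  "zeta p = cis (2 * pi / real p)"

definition Rval :: "nat \<Rightarrow> nat \<Rightarrow> (nat \<Rightarrow> complex) \<Rightarrow> complex" where
  "Rval p m z = (\<Prod>\<iota>\<in>({..<m} \<rightarrow>\<^sub>E {1..p}). 1 - (\<Sum>j<m. zeta p ^ \<iota> j * z j))"

text \<open>The specialised polynomials Mbar_1..Mbar_m (list index k corresponds to M_(k+1)).\<close>
definition Mbar :: "nat \<Rightarrow> nat \<Rightarrow> (nat \<Rightarrow> complex) \<Rightarrow> nat \<Rightarrow> cpoly" where
  "Mbar p m z k = (if k < m - 1 then pvar k ^ p - pvar (m - 1) ^ p
                   else pvar (m - 1) ^ p - (\<Sum>j<m. pconst (z j) * pvar j) ^ p)"

definition Mbars :: "nat \<Rightarrow> nat \<Rightarrow> (nat \<Rightarrow> complex) \<Rightarrow> cpoly list" where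
  "Mbars p m z = map (Mbar p m z) [0..<m]"

definition homog_part :: "nat \<Rightarrow> nat \<Rightarrow> cpoly set" where
  "homog_part m d = {f. in_vars m f \<and> homog d f}"

definition quot_dim :: "nat \<Rightarrow> cpoly set \<Rightarrow> nat \<Rightarrow> nat" where
  "quot_dim m I d = vector_space.dim cscale (homog_part m d)
                    - vector_space.dim cscale (homog_part m d \<inter> I)"

definition rcoef :: "nat \<Rightarrow> nat \<Rightarrow> nat \<Rightarrow> rat" where
  "rcoef p m d = fps_nth ((1 - fps_X ^ p) ^ (m - 1) / (1 - fps_X) ^ m) d"

end

theory Submission
  imports Defs
begin

abbreviation lk :: "('a \<Rightarrow>\<^sub>0 'b::zero) \<Rightarrow> 'a \<Rightarrow> 'b" where "lk \<equiv> Poly_Mapping.lookup"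
abbreviation ks :: "('a \<Rightarrow>\<^sub>0 'b::zero) \<Rightarrow> 'a set" where "ks \<equiv> Poly_Mapping.keys"
abbreviation sng :: "'a \<Rightarrow> 'b \<Rightarrow> ('a \<Rightarrow>\<^sub>0 'b::zero)" where "sng \<equiv> Poly_Mapping.single"

definition mon :: "(nat \<Rightarrow>\<^sub>0 nat) \<Rightarrow> cpoly" where "mon a = sng a 1"

lemma mon_mult: "mon a * mon b = mon (a + b)"
  by (simp add: mon_def mult_single)

lemma mon_zero: "mon 0 = 1" by (simp add: mon_def)

lemma pvar_pow: "pvar i ^ n = mon (sng i n)"
proof (induction n)
  case 0 then show ?case by (simp add: mon_def)
next
  case (Suc n)
  then show ?case by (simp add: pvar_def mon_def mult_single single_add[symmetric])
qed

lemma lookup_cscale: "lk (cscale c f) a = c * lk f a"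
  by (simp add: cscale_def map.rep_eq when_def)

lemma cscale_pconst: "cscale c f = pconst c * f"
  by (simp add: cscale_def pconst_def mult_map_scale_conv_mult)

lemma lookup_pconst_mult: "lk (pconst c * f) a = c * lk f a"
  by (metis cscale_pconst lookup_cscale)

lemma poly_sum_single: "f = (\<Sum>\<alpha>\<in>ks f. sng \<alpha> (lk f \<alpha>))"
proof (rule poly_mapping_eqI)
  fix t
  show "lk f t = lk (\<Sum>\<alpha>\<in>ks f. sng \<alpha> (lk f \<alpha>)) t"
    by (cases "t \<in> ks f") (auto simp: lookup_sum lookup_single when_def in_keys_iff)
qed

lemma poly_sum_single_superset:
  assumes "finite S" "ks f \<subseteq> S"
  shows "f = (\<Sum>\<alpha>\<in>S. sng \<alpha> (lk f \<alpha>))"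
proof -
  have "(\<Sum>\<alpha>\<in>S. sng \<alpha> (lk f \<alpha>)) = (\<Sum>\<alpha>\<in>ks f. sng \<alpha> (lk f \<alpha>))"
    using assms by (intro sum.mono_neutral_right) (auto simp: in_keys_iff)
  then show ?thesis using poly_sum_single by metis
qed

definition mmap :: "((nat \<Rightarrow>\<^sub>0 nat) \<Rightarrow> complex) \<Rightarrow> ((nat \<Rightarrow>\<^sub>0 nat) \<Rightarrow> (nat \<Rightarrow>\<^sub>0 nat)) \<Rightarrow> cpoly \<Rightarrow> cpoly"
  where "mmap c b f = (\<Sum>\<alpha>\<in>ks f. sng (b \<alpha>) (c \<alpha> * lk f \<alpha>))"

lemma mmap_superset:
  assumes "finite S" "ks f \<subseteq> S"
  shows "mmap c b f = (\<Sum>\<alpha>\<in>S. sng (b \<alpha>) (c \<alpha> * lk f \<alpha>))"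
  unfolding mmap_def using assms
  by (intro sum.mono_neutral_left) (auto simp: in_keys_iff)

lemma mmap_add: "mmap c b (f + g) = mmap c b f + mmap c b g"
proof -
  let ?S = "ks f \<union> ks g"
  have "mmap c b (f + g) = (\<Sum>\<alpha>\<in>?S. sng (b \<alpha>) (c \<alpha> * lk (f + g) \<alpha>))"
    by (rule mmap_superset) (auto simp: keys_add)
  also have "\<dots> = (\<Sum>\<alpha>\<in>?S. sng (b \<alpha>) (c \<alpha> * lk f \<alpha>)) + (\<Sum>\<alpha>\<in>?S. sng (b \<alpha>) (c \<alpha> * lk g \<alpha>))"
    by (simp add: lookup_add distrib_left single_add sum.distrib)
  also have "\<dots> = mmap c b f + mmap c b g"
    using mmap_superset[of ?S f c b] mmap_superset[of ?S g c b] by auto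
  finally show ?thesis .
qed

lemma mmap_zero [simp]: "mmap c b 0 = 0" by (simp add: mmap_def)

lemma mmap_single: "mmap c b (sng a v) = sng (b a) (c a * v)"
  by (cases "v = 0") (simp_all add: mmap_def)

lemma mmap_sum: "finite A \<Longrightarrow> mmap c b (\<Sum>x\<in>A. F x) = (\<Sum>x\<in>A. mmap c b (F x))"
  by (induction A rule: finite_induct) (simp_all add: mmap_add)

lemma mmap_uminus: "mmap c b (- f) = - mmap c b f"
  using mmap_add[of c b f "-f"] by (metis add.commute eq_neg_iff_add_eq_0 mmap_zero add.right_inverse)

lemma mmap_diff: "mmap c b (f - g) = mmap c b f - mmap c b g"
  using mmap_add[of c b f "-g"] by (simp add: mmap_uminus)

lemma mult_as_sum: "(f::cpoly) * g = (\<Sum>\<alpha>\<in>ks f. \<Sum>\<gamma>\<in>ks g. sng (\<alpha> + \<gamma>) (lk f \<alpha> * lk g \<gamma>))"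
proof -
  have "f * g = (\<Sum>\<alpha>\<in>ks f. sng \<alpha> (lk f \<alpha>)) * (\<Sum>\<gamma>\<in>ks g. sng \<gamma> (lk g \<gamma>))"
    using poly_sum_single by metis
  also have "\<dots> = (\<Sum>\<alpha>\<in>ks f. \<Sum>\<gamma>\<in>ks g. sng (\<alpha> + \<gamma>) (lk f \<alpha> * lk g \<gamma>))"
    by (simp add: sum_product mult_single)
  finally show ?thesis .
qed

lemma mmap_mult:
  assumes b: "\<And>x y. b (x + y) = b x + b y" and c: "\<And>x y. c (x + y) = c x * c y"
  shows "mmap c b (f * g) = mmap c b f * mmap c b g"
proof -
  have "mmap c b (f * g) = (\<Sum>\<alpha>\<in>ks f. \<Sum>\<gamma>\<in>ks g. sng (b (\<alpha> + \<gamma>)) (c (\<alpha> + \<gamma>) * (lk f \<alpha> * lk g \<gamma>)))"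
    by (subst mult_as_sum) (simp add: mmap_sum mmap_single)
  also have "\<dots> = (\<Sum>\<alpha>\<in>ks f. \<Sum>\<gamma>\<in>ks g. sng (b \<alpha>) (c \<alpha> * lk f \<alpha>) * sng (b \<gamma>) (c \<gamma> * lk g \<gamma>))"
    by (simp add: b c mult_single mult_ac)
  also have "\<dots> = mmap c b f * mmap c b g"
    by (simp add: mmap_def sum_product)
  finally show ?thesis .
qed

lemma mmap_one:
  assumes "b 0 = 0" "c 0 = 1" shows "mmap c b 1 = 1"
  using mmap_single[of c b 0 1] assms by simp

lemma mmap_power:
  assumes b: "\<And>x y. b (x + y) = b x + b y" and c: "\<And>x y. c (x + y) = c x * c y"
    and "b 0 = 0" "c 0 = 1"
  shows "mmap c b (f ^ n) = mmap c b f ^ n"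
  by (induction n) (simp_all add: mmap_one assms mmap_mult[OF b c])



lemma keys_add_sub: "ks (f + g) \<subseteq> ks f \<union> ks g"
  by (rule keys_add)

lemma keys_uminus_eq: "ks (- (f::cpoly)) = ks f"
  by (auto simp: in_keys_iff)

lemma in_vars_zero [simp]: "in_vars m 0" by (simp add: in_vars_def)

lemma in_vars_add: "in_vars m f \<Longrightarrow> in_vars m g \<Longrightarrow> in_vars m (f + g)"
  unfolding in_vars_def using keys_add_sub[of f g] by blast

lemma in_vars_uminus: "in_vars m f \<Longrightarrow> in_vars m (- f)"
  unfolding in_vars_def by (simp add: keys_uminus_eq)

lemma in_vars_diff: "in_vars m f \<Longrightarrow> in_vars m g \<Longrightarrow> in_vars m (f - g)"
  using in_vars_add[of m f "-g"] in_vars_uminus by simp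

lemma keys_add_nat: "ks ((\<alpha>::nat \<Rightarrow>\<^sub>0 nat) + \<beta>) = ks \<alpha> \<union> ks \<beta>"
  by (auto simp: in_keys_iff lookup_add)

lemma in_vars_mult: "in_vars m f \<Longrightarrow> in_vars m g \<Longrightarrow> in_vars m (f * g)"
  unfolding in_vars_def using keys_mult[of f g] by (fastforce simp: keys_add_nat)

lemma in_vars_sum: "(\<And>x. x \<in> A \<Longrightarrow> in_vars m (F x)) \<Longrightarrow> in_vars m (\<Sum>x\<in>A. F x)"
  by (induction A rule: infinite_finite_induct) (auto intro: in_vars_add)

lemma in_vars_single: "ks \<alpha> \<subseteq> {..<m} \<Longrightarrow> in_vars m (sng \<alpha> c)"
  by (simp add: in_vars_def)

lemma in_vars_mon: "ks \<alpha> \<subseteq> {..<m} \<Longrightarrow> in_vars m (mon \<alpha>)"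
  by (simp add: mon_def in_vars_single)

lemma in_vars_one [simp]: "in_vars m 1"
  using in_vars_single[of 0 m 1] by simp

lemma in_vars_pow: "in_vars m f \<Longrightarrow> in_vars m (f ^ n)"
  by (induction n) (simp_all add: in_vars_mult)

lemma in_vars_pconst [simp]: "in_vars m (pconst c)"
  by (simp add: pconst_def in_vars_single)

lemma in_vars_pvar: "j < m \<Longrightarrow> in_vars m (pvar j)"
  by (simp add: pvar_def in_vars_single)

lemma ideal_zero: "0 \<in> gen_ideal m gs"
  unfolding gen_ideal_def by (rule CollectI, rule exI[of _ "\<lambda>_. 0"]) simp

lemma ideal_add: "f \<in> gen_ideal m gs \<Longrightarrow> g \<in> gen_ideal m gs \<Longrightarrow> f + g \<in> gen_ideal m gs"
  unfolding gen_ideal_def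
proof safe
  fix h1 h2 assume "\<forall>i<length gs. in_vars m (h1 i)" "\<forall>i<length gs. in_vars m (h2 i)"
  then show "\<exists>h. (\<forall>i<length gs. in_vars m (h i)) \<and>
     (\<Sum>i<length gs. h1 i * gs ! i) + (\<Sum>i<length gs. h2 i * gs ! i) = (\<Sum>i<length gs. h i * gs ! i)"
    by (intro exI[of _ "\<lambda>i. h1 i + h2 i"]) (auto simp: distrib_right sum.distrib intro: in_vars_add)
qed

lemma ideal_mult: "in_vars m q \<Longrightarrow> f \<in> gen_ideal m gs \<Longrightarrow> q * f \<in> gen_ideal m gs"
  unfolding gen_ideal_def
proof safe
  fix h assume "in_vars m q" "\<forall>i<length gs. in_vars m (h i)"
  then show "\<exists>h'. (\<forall>i<length gs. in_vars m (h' i)) \<and>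
     q * (\<Sum>i<length gs. h i * gs ! i) = (\<Sum>i<length gs. h' i * gs ! i)"
    by (intro exI[of _ "\<lambda>i. q * h i"]) (auto simp: sum_distrib_left mult.assoc intro: in_vars_mult)
qed

lemma ideal_uminus: "f \<in> gen_ideal m gs \<Longrightarrow> - f \<in> gen_ideal m gs"
  using ideal_mult[of m "-1" f gs] by (simp add: in_vars_uminus)

lemma ideal_diff: "f \<in> gen_ideal m gs \<Longrightarrow> g \<in> gen_ideal m gs \<Longrightarrow> f - g \<in> gen_ideal m gs"
  using ideal_add[of f m gs "-g"] ideal_uminus by simp

lemma ideal_gen: "i < length gs \<Longrightarrow> gs ! i \<in> gen_ideal m gs"
proof -
  assume i: "i < length gs"
  have "(\<Sum>j<length gs. (if j = i then 1 else 0) * gs ! j) = (\<Sum>j<length gs. if j = i then gs ! j else 0)"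
    by (rule sum.cong) auto
  also have "\<dots> = gs ! i" using i by (simp add: sum.delta)
  finally show ?thesis unfolding gen_ideal_def
    by (intro CollectI exI[of _ "\<lambda>j. if j = i then 1 else 0"]) auto
qed

lemma ideal_sum: "(\<And>x. x \<in> A \<Longrightarrow> F x \<in> gen_ideal m gs) \<Longrightarrow> (\<Sum>x\<in>A. F x) \<in> gen_ideal m gs"
  by (induction A rule: infinite_finite_induct) (auto intro: ideal_add ideal_zero)

lemma mdeg_superset: "finite S \<Longrightarrow> ks \<alpha> \<subseteq> S \<Longrightarrow> mdeg \<alpha> = (\<Sum>i\<in>S. lk \<alpha> i)"
  unfolding mdeg_def by (intro sum.mono_neutral_left) (auto simp: in_keys_iff)

lemma mdeg_add: "mdeg (\<alpha> + \<beta>) = mdeg \<alpha> + mdeg \<beta>"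
proof -
  let ?S = "ks \<alpha> \<union> ks \<beta>"
  have "mdeg (\<alpha> + \<beta>) = (\<Sum>i\<in>?S. lk (\<alpha> + \<beta>) i)" by (rule mdeg_superset) (auto simp: keys_add_nat)
  also have "\<dots> = (\<Sum>i\<in>?S. lk \<alpha> i) + (\<Sum>i\<in>?S. lk \<beta> i)" by (simp add: lookup_add sum.distrib)
  also have "\<dots> = mdeg \<alpha> + mdeg \<beta>" using mdeg_superset[of ?S \<alpha>] mdeg_superset[of ?S \<beta>] by auto
  finally show ?thesis .
qed

lemma mdeg_single [simp]: "mdeg (sng i n) = n"
  by (cases "n = 0") (simp_all add: mdeg_def)

lemma mdeg_zero [simp]: "mdeg 0 = 0" by (simp add: mdeg_def)

lemma homog_zero [simp]: "homog d 0" by (simp add: homog_def)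

lemma homog_add: "homog d f \<Longrightarrow> homog d g \<Longrightarrow> homog d (f + g)"
  unfolding homog_def using keys_add_sub[of f g] by blast

lemma homog_uminus: "homog d f \<Longrightarrow> homog d (- f)"
  unfolding homog_def by (simp add: keys_uminus_eq)

lemma homog_diff: "homog d f \<Longrightarrow> homog d g \<Longrightarrow> homog d (f - g)"
  using homog_add[of d f "-g"] homog_uminus by simp

lemma homog_mult: "homog d f \<Longrightarrow> homog e g \<Longrightarrow> homog (d + e) (f * g)"
  unfolding homog_def using keys_mult[of f g] by (fastforce simp: mdeg_add)

lemma homog_sum: "(\<And>x. x \<in> A \<Longrightarrow> homog d (F x)) \<Longrightarrow> homog d (\<Sum>x\<in>A. F x)"
  by (induction A rule: infinite_finite_induct) (auto intro: homog_add)

lemma homog_single: "mdeg \<alpha> = d \<Longrightarrow> homog d (sng \<alpha> c)"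
  by (simp add: homog_def)

lemma homog_mon: "mdeg \<alpha> = d \<Longrightarrow> homog d (mon \<alpha>)"
  by (simp add: mon_def homog_single)

lemma homog_one: "homog 0 1"
  using homog_single[of 0 0 1] by simp

lemma homog_pow: "homog d f \<Longrightarrow> homog (n * d) (f ^ n)"
proof (induction n)
  case 0 then show ?case by (simp add: homog_one)
next
  case (Suc n) then show ?case using homog_mult[of d f "n*d" "f^n"] by (simp add: add.commute)
qed

lemma homog_pconst_mult: "homog d f \<Longrightarrow> homog d (pconst c * f)"
  using homog_mult[of 0 "pconst c" d f] homog_single[of 0 0 c] by (simp add: pconst_def)



lemma zeta_pow: "zeta p ^ c = cis (2 * pi * real c / real p)"
  by (simp add: zeta_def DeMoivre mult_ac)

lemma zeta_pow_p: "0 < p \<Longrightarrow> zeta p ^ p = 1"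
  by (simp add: zeta_pow)

lemma zeta_pow_mod: "0 < p \<Longrightarrow> zeta p ^ c = zeta p ^ (c mod p)"
proof -
  assume p: "0 < p"
  have "zeta p ^ c = zeta p ^ (p * (c div p) + c mod p)" by simp
  also have "\<dots> = (zeta p ^ p) ^ (c div p) * zeta p ^ (c mod p)" by (metis power_add power_mult)
  finally show ?thesis using zeta_pow_p[OF p] by simp
qed

lemma zeta_pow_eq_1: "0 < p \<Longrightarrow> zeta p ^ c = 1 \<longleftrightarrow> p dvd c"
proof
  assume p: "0 < p" and h: "zeta p ^ c = 1"
  have inj: "inj_on (\<lambda>k. cis (2 * pi * real k / real p)) {..<p}"
    using bij_betw_roots_unity[OF p] by (simp add: bij_betw_def)
  have "cis (2 * pi * real (c mod p) / real p) = cis (2 * pi * real 0 / real p)"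
    using h zeta_pow_mod[OF p, of c] unfolding zeta_pow by simp
  from inj_onD[OF inj this] have "c mod p = 0" using p by simp
  then show "p dvd c" by (simp add: dvd_eq_mod_eq_0)
next
  assume p: "0 < p" and "p dvd c"
  then obtain q where "c = p * q" by blast
  then show "zeta p ^ c = 1" using zeta_pow_p[OF p] by (simp add: power_mult)
qed

lemma zeta_sum: "0 < p \<Longrightarrow> (\<Sum>t<p. zeta p ^ (t * c)) = (if p dvd c then of_nat p else 0)"
proof -
  assume p: "0 < p"
  show ?thesis
  proof (cases "p dvd c")
    case True
    then have "\<And>t. zeta p ^ (t * c) = 1" using zeta_pow_eq_1[OF p] by simp
    then show ?thesis using True by simp
  next
    case False
    then have ne: "zeta p ^ c \<noteq> 1" using zeta_pow_eq_1[OF p] by simp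
    have "(\<Sum>t<p. zeta p ^ (t * c)) = (\<Sum>t<p. (zeta p ^ c) ^ t)"
      by (simp add: power_mult[symmetric] mult.commute)
    also have "\<dots> = ((zeta p ^ c) ^ p - 1) / (zeta p ^ c - 1)" using ne by (rule geometric_sum)
    also have "(zeta p ^ c) ^ p = (zeta p ^ p) ^ c" by (metis power_mult mult.commute)
    also have "\<dots> = 1" using zeta_pow_p[OF p] by simp
    finally show ?thesis using False by simp
  qed
qed

lemma root_unity_zeta: "0 < p \<Longrightarrow> w ^ p = 1 \<Longrightarrow> \<exists>l<p. w = zeta p ^ l"
proof -
  assume p: "0 < p" and w: "w ^ p = 1"
  have "w \<in> (\<lambda>k. cis (2 * pi * real k / real p)) ` {..<p}"
    using bij_betw_roots_unity[OF p] w by (simp add: bij_betw_def)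
  then show ?thesis by (auto simp: zeta_pow)
qed

lemma dvd_lt_eq: "0 < (p::nat) \<Longrightarrow> a < p \<Longrightarrow> b < p \<Longrightarrow> p dvd (a + (p - 1) * b) \<Longrightarrow> a = b"
proof -
  assume p: "0 < p" "a < p" "b < p" "p dvd (a + (p - 1) * b)"
  have "int ((p - 1) * b) = (int p - 1) * int b" using p by (simp add: of_nat_diff)
  then have e: "int (a + (p - 1) * b) = int a - int b + int p * int b" by (simp add: algebra_simps)
  have d1: "int p dvd int (a + (p - 1) * b)" using p(4) by (simp only: int_dvd_int_iff)
  have e2: "int a - int b = int (a + (p - 1) * b) - int p * int b" using e by simp
  have dv: "int p dvd int a - int b" unfolding e2 by (rule dvd_diff[OF d1 dvd_triv_left])
  have lt: "\<bar>int a - int b\<bar> < int p" using p by linarith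
  show "a = b"
  proof (rule ccontr)
    assume "a \<noteq> b"
    then have "int a - int b \<noteq> 0" by simp
    from dvd_imp_le_int[OF this dv] lt show False by simp
  qed
qed



definition redv :: "nat \<Rightarrow> nat \<Rightarrow> nat \<Rightarrow> (nat \<Rightarrow>\<^sub>0 nat) \<Rightarrow> (nat \<Rightarrow>\<^sub>0 nat)" where
  "redv p n j \<gamma> = Poly_Mapping.update j (lk \<gamma> j mod p) \<gamma> + sng n (p * (lk \<gamma> j div p))"

primrec rho :: "nat \<Rightarrow> nat \<Rightarrow> nat \<Rightarrow> (nat \<Rightarrow>\<^sub>0 nat) \<Rightarrow> (nat \<Rightarrow>\<^sub>0 nat)" where
  "rho p n 0 \<alpha> = \<alpha>"
| "rho p n (Suc k) \<alpha> = redv p n k (rho p n k \<alpha>)"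

lemma lookup_redv: "j \<noteq> n \<Longrightarrow> lk (redv p n j \<gamma>) t =
   (if t = j then lk \<gamma> j mod p else if t = n then lk \<gamma> n + p * (lk \<gamma> j div p) else lk \<gamma> t)"
  by (simp add: redv_def lookup_add lookup_update lookup_single when_def)

lemma lookup_rho: "k \<le> n \<Longrightarrow> lk (rho p n k \<alpha>) t =
  (if t < k then lk \<alpha> t mod p else if t = n then lk \<alpha> n + p * (\<Sum>j<k. lk \<alpha> j div p) else lk \<alpha> t)"
proof (induction k arbitrary: t)
  case 0 show ?case by simp
next
  case (Suc k)
  then have kn: "k < n" "k \<le> n" by auto
  have IH: "\<And>t. lk (rho p n k \<alpha>) t =
    (if t < k then lk \<alpha> t mod p else if t = n then lk \<alpha> n + p * (\<Sum>j<k. lk \<alpha> j div p) else lk \<alpha> t)"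
    using Suc.IH[OF kn(2)] .
  show ?case
    using kn by (simp add: lookup_redv IH algebra_simps)
qed

lemma keys_rho: "k \<le> n \<Longrightarrow> ks \<alpha> \<subseteq> {..<Suc n} \<Longrightarrow> ks (rho p n k \<alpha>) \<subseteq> {..<Suc n}"
proof
  fix t assume kn: "k \<le> n" and ka: "ks \<alpha> \<subseteq> {..<Suc n}" and t: "t \<in> ks (rho p n k \<alpha>)"
  show "t \<in> {..<Suc n}"
  proof (rule ccontr)
    assume nt: "t \<notin> {..<Suc n}"
    then have "t \<notin> ks \<alpha>" using ka by blast
    then have "lk \<alpha> t = 0" by (simp add: in_keys_iff)
    moreover have "\<not> t < k" "t \<noteq> n" using nt kn by auto
    ultimately have "lk (rho p n k \<alpha>) t = 0" using kn by (simp add: lookup_rho)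
    then show False using t by (simp add: in_keys_iff)
  qed
qed

lemma rho_reduced: "0 < p \<Longrightarrow> k \<le> n \<Longrightarrow> t < k \<Longrightarrow> lk (rho p n k \<alpha>) t < p"
  by (simp add: lookup_rho)

lemma rho_id: "k \<le> n \<Longrightarrow> (\<forall>t<k. lk \<alpha> t < p) \<Longrightarrow> rho p n k \<alpha> = \<alpha>"
  by (rule poly_mapping_eqI) (simp add: lookup_rho)

lemma rho_neq: "0 < p \<Longrightarrow> k \<le> n \<Longrightarrow> t < k \<Longrightarrow> p \<le> lk \<alpha> t \<Longrightarrow> rho p n k \<alpha> \<noteq> \<alpha>"
proof
  assume "0 < p" "k \<le> n" "t < k" "p \<le> lk \<alpha> t" "rho p n k \<alpha> = \<alpha>"
  then have "lk \<alpha> t mod p = lk \<alpha> t" using lookup_rho[of k n p \<alpha> t] by simp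
  moreover have "lk \<alpha> t mod p < p" using \<open>0 < p\<close> by simp
  ultimately show False using \<open>p \<le> lk \<alpha> t\<close> by linarith
qed

lemma redv_decomp: "(\<gamma>::nat \<Rightarrow>\<^sub>0 nat) = Poly_Mapping.update j (lk \<gamma> j mod p) \<gamma> + sng j (p * (lk \<gamma> j div p))"
  by (rule poly_mapping_eqI) (simp add: lookup_add lookup_update lookup_single when_def)

lemma mdeg_redv: "j \<noteq> n \<Longrightarrow> mdeg (redv p n j \<gamma>) = mdeg \<gamma>"
proof -
  have "mdeg \<gamma> = mdeg (Poly_Mapping.update j (lk \<gamma> j mod p) \<gamma>) + p * (lk \<gamma> j div p)"
    by (subst redv_decomp[of \<gamma> j p]) (simp add: mdeg_add)
  then show ?thesis by (simp add: redv_def mdeg_add)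
qed

lemma mdeg_rho: "k \<le> n \<Longrightarrow> mdeg (rho p n k \<alpha>) = mdeg \<alpha>"
  by (induction k) (simp_all add: mdeg_redv)

definition beta :: "nat \<Rightarrow> nat \<Rightarrow> (nat \<Rightarrow>\<^sub>0 nat) \<Rightarrow> (nat \<Rightarrow>\<^sub>0 nat)" where
  "beta n k \<alpha> = Abs_poly_mapping (\<lambda>t. if t < k then 0 else if t = n then lk \<alpha> n + (\<Sum>j<k. lk \<alpha> j) else lk \<alpha> t)"

lemma lookup_beta: "lk (beta n k \<alpha>) t = (if t < k then 0 else if t = n then lk \<alpha> n + (\<Sum>j<k. lk \<alpha> j) else lk \<alpha> t)"
proof -
  let ?f = "\<lambda>t. if t < k then 0 else if t = n then lk \<alpha> n + (\<Sum>j<k. lk \<alpha> j) else lk \<alpha> t"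
  have "{t. ?f t \<noteq> 0} \<subseteq> insert n (ks \<alpha>)" by (auto simp: in_keys_iff)
  then have "finite {t. ?f t \<noteq> 0}" by (rule finite_subset) simp
  then show ?thesis unfolding beta_def by simp
qed

lemma beta_add: "beta n k (\<alpha> + \<gamma>) = beta n k \<alpha> + beta n k \<gamma>"
  by (rule poly_mapping_eqI) (simp add: lookup_beta lookup_add sum.distrib)

lemma beta_zero: "beta n k 0 = 0"
  by (rule poly_mapping_eqI) (simp add: lookup_beta)

definition cc :: "nat \<Rightarrow> nat \<Rightarrow> (nat \<Rightarrow> nat) \<Rightarrow> (nat \<Rightarrow>\<^sub>0 nat) \<Rightarrow> complex" where
  "cc p k i \<alpha> = zeta p ^ (\<Sum>j<k. i j * lk \<alpha> j)"

lemma cc_add: "cc p k i (\<alpha> + \<gamma>) = cc p k i \<alpha> * cc p k i \<gamma>"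
  by (simp add: cc_def lookup_add distrib_left sum.distrib power_add)

lemma cc_zero: "cc p k i 0 = 1"
  by (simp add: cc_def)

definition phi :: "nat \<Rightarrow> nat \<Rightarrow> nat \<Rightarrow> (nat \<Rightarrow> nat) \<Rightarrow> cpoly \<Rightarrow> cpoly" where
  "phi p n k i = mmap (cc p k i) (beta n k)"

lemma phi_add: "phi p n k i (f + g) = phi p n k i f + phi p n k i g"
  by (simp add: phi_def mmap_add)
lemma phi_diff: "phi p n k i (f - g) = phi p n k i f - phi p n k i g"
  by (simp add: phi_def mmap_diff)
lemma phi_sum: "finite A \<Longrightarrow> phi p n k i (\<Sum>x\<in>A. F x) = (\<Sum>x\<in>A. phi p n k i (F x))"
  by (simp add: phi_def mmap_sum)
lemma phi_mult: "phi p n k i (f * g) = phi p n k i f * phi p n k i g"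
  unfolding phi_def by (rule mmap_mult) (simp_all add: beta_add cc_add)
lemma phi_one: "phi p n k i 1 = 1"
  unfolding phi_def by (rule mmap_one) (simp_all add: beta_zero cc_zero)
lemma phi_pow: "phi p n k i (f ^ e) = phi p n k i f ^ e"
  by (induction e) (simp_all add: phi_one phi_mult)
lemma phi_single: "phi p n k i (sng \<alpha> c) = sng (beta n k \<alpha>) (cc p k i \<alpha> * c)"
  by (simp add: phi_def mmap_single)

lemma beta_single_lt: "j < k \<Longrightarrow> k \<le> n \<Longrightarrow> beta n k (sng j e) = sng n e"
  by (rule poly_mapping_eqI) (auto simp: lookup_beta lookup_single when_def)

lemma beta_single_ge: "k \<le> j \<Longrightarrow> beta n k (sng j e) = sng j e"
  by (rule poly_mapping_eqI) (auto simp: lookup_beta lookup_single when_def)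

lemma cc_single_lt: "j < k \<Longrightarrow> cc p k i (sng j e) = zeta p ^ (i j * e)"
proof -
  assume jk: "j < k"
  have "(\<Sum>t<k. i t * lk (sng j e) t) = (\<Sum>t<k. if t = j then i j * e else 0)"
    by (rule sum.cong) (auto simp: lookup_single when_def)
  also have "\<dots> = i j * e" using jk by simp
  finally show ?thesis by (simp add: cc_def)
qed

lemma cc_single_ge: "k \<le> j \<Longrightarrow> cc p k i (sng j e) = 1"
proof -
  assume jk: "k \<le> j"
  have "\<forall>t\<in>{..<k}. i t * lk (sng j e) t = 0" using jk by (auto simp: lookup_single when_def)
  then have s0: "(\<Sum>t<k. i t * lk (sng j e) t) = 0" by (rule sum.neutral)
  show ?thesis unfolding cc_def s0 by simp
qed

lemma zeta_pow_pow: "0 < p \<Longrightarrow> (zeta p ^ a) ^ p = 1"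
  by (metis power_mult mult.commute zeta_pow_p power_one)

lemma phi_gen: "0 < p \<Longrightarrow> j < k \<Longrightarrow> k \<le> n \<Longrightarrow> phi p n k i (mon (sng j p) - mon (sng n p)) = 0"
  by (simp add: mon_def phi_diff phi_single beta_single_lt beta_single_ge cc_single_lt cc_single_ge
      power_mult zeta_pow_pow)



lemma length_Mbars [simp]: "length (Mbars p m z) = m"
  by (simp add: Mbars_def)

lemma nth_Mbars: "i < m \<Longrightarrow> Mbars p m z ! i = Mbar p m z i"
  by (simp add: Mbars_def)

lemma length_take_Mbars: "k \<le> m \<Longrightarrow> length (take k (Mbars p m z)) = k"
  by simp

lemma nth_take_Mbars: "i < k \<Longrightarrow> k \<le> m \<Longrightarrow> take k (Mbars p m z) ! i = Mbar p m z i"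
  by (simp add: nth_Mbars)

lemma Mbar_lt: "i < n \<Longrightarrow> Mbar p (Suc n) z i = mon (sng i p) - mon (sng n p)"
  by (simp add: Mbar_def pvar_pow)

lemma mon_in_vars: "ks \<alpha> \<subseteq> {..<m} \<Longrightarrow> in_vars m (mon \<alpha>)"
  by (rule in_vars_mon)

lemma single_as_mon: "sng \<alpha> c = pconst c * mon \<alpha>"
  by (simp add: pconst_def mon_def mult_single)

context
  fixes p n :: nat and z :: "nat \<Rightarrow> complex"
  assumes p: "0 < p"
begin

abbreviation II :: "nat \<Rightarrow> cpoly set" where
  "II k \<equiv> gen_ideal (Suc n) (take k (Mbars p (Suc n) z))"

lemma gen_in_II: "j < k \<Longrightarrow> k \<le> n \<Longrightarrow> mon (sng j p) - mon (sng n p) \<in> II k"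
proof -
  assume jk: "j < k" "k \<le> n"
  have "take k (Mbars p (Suc n) z) ! j \<in> II k"
    by (rule ideal_gen) (use jk in simp)
  then show ?thesis using jk by (simp add: nth_Mbars Mbar_lt)
qed

lemma swap_in_II:
  assumes jK: "j < K" "K \<le> n" and b: "ks \<beta> \<subseteq> {..<Suc n}"
  shows "mon (\<beta> + sng j (p * q)) - mon (\<beta> + sng n (p * q)) \<in> II K"
  using b
proof (induction q arbitrary: \<beta>)
  case 0 then show ?case by (simp add: ideal_zero)
next
  case (Suc q)
  have s1: "sng j (p * Suc q) = sng j (p * q) + sng j p" by (simp add: single_add[symmetric] add.commute)
  have s2: "sng n (p * Suc q) = sng n (p * q) + sng n p" by (simp add: single_add[symmetric] add.commute)
  have e: "mon (\<beta> + sng j (p * Suc q)) - mon (\<beta> + sng n (p * Suc q)) =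
    mon (\<beta> + sng j (p * q)) * (mon (sng j p) - mon (sng n p)) +
    (mon ((\<beta> + sng n p) + sng j (p * q)) - mon ((\<beta> + sng n p) + sng n (p * q)))"
    unfolding s1 s2 by (simp add: right_diff_distrib mon_mult ac_simps)
  have kb: "ks (\<beta> + sng j (p * q)) \<subseteq> {..<Suc n}" using Suc.prems jK by (auto simp: keys_add_nat)
  have kb2: "ks (\<beta> + sng n p) \<subseteq> {..<Suc n}" using Suc.prems by (auto simp: keys_add_nat)
  have "mon (\<beta> + sng j (p * q)) * (mon (sng j p) - mon (sng n p)) \<in> II K"
    by (rule ideal_mult[OF in_vars_mon[OF kb] gen_in_II[OF jK]])
  moreover have "mon ((\<beta> + sng n p) + sng j (p * q)) - mon ((\<beta> + sng n p) + sng n (p * q)) \<in> II K"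
    by (rule Suc.IH[OF kb2])
  ultimately show ?case unfolding e by (rule ideal_add)
qed

lemma redv_in_II:
  assumes jK: "j < K" "K \<le> n" and g: "ks \<gamma> \<subseteq> {..<Suc n}"
  shows "mon \<gamma> - mon (redv p n j \<gamma>) \<in> II K"
proof -
  let ?\<beta> = "Poly_Mapping.update j (lk \<gamma> j mod p) \<gamma>"
  have kb: "ks ?\<beta> \<subseteq> {..<Suc n}" using g jK by (auto simp: keys_update)
  have "mon (?\<beta> + sng j (p * (lk \<gamma> j div p))) - mon (?\<beta> + sng n (p * (lk \<gamma> j div p))) \<in> II K"
    by (rule swap_in_II[OF jK kb])
  then show ?thesis using redv_decomp[of \<gamma> j p] by (simp add: redv_def)
qed

lemma rho_in_II:
  assumes "k \<le> K" "K \<le> n" and a: "ks \<alpha> \<subseteq> {..<Suc n}"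
  shows "mon \<alpha> - mon (rho p n k \<alpha>) \<in> II K"
  using assms(1)
proof (induction k)
  case 0 then show ?case by (simp add: ideal_zero)
next
  case (Suc k)
  then have kK: "k < K" "k \<le> K" by auto
  have kr: "ks (rho p n k \<alpha>) \<subseteq> {..<Suc n}" using keys_rho[OF _ a, of k p] kK assms(2) by simp
  have "mon \<alpha> - mon (rho p n (Suc k) \<alpha>) =
     (mon \<alpha> - mon (rho p n k \<alpha>)) + (mon (rho p n k \<alpha>) - mon (redv p n k (rho p n k \<alpha>)))" by simp
  also have "\<dots> \<in> II K"
    by (rule ideal_add[OF Suc.IH[OF kK(2)] redv_in_II[OF kK(1) assms(2) kr]])
  finally show ?case .
qed

lemma phi_II: "k \<le> n \<Longrightarrow> f \<in> II k \<Longrightarrow> phi p n k i f = 0"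
proof -
  assume kn: "k \<le> n" and f: "f \<in> II k"
  then obtain h where f_eq: "f = (\<Sum>j<k. h j * take k (Mbars p (Suc n) z) ! j)"
    unfolding gen_ideal_def by auto
  have "phi p n k i f = (\<Sum>j<k. phi p n k i (h j) * phi p n k i (take k (Mbars p (Suc n) z) ! j))"
    by (simp add: f_eq phi_sum phi_mult)
  also have "\<dots> = 0"
  proof (rule sum.neutral, rule ballI)
    fix j assume "j \<in> {..<k}"
    then have j: "j < k" by simp
    then have "take k (Mbars p (Suc n) z) ! j = mon (sng j p) - mon (sng n p)"
      using kn by (simp add: nth_Mbars Mbar_lt)
    then show "phi p n k i (h j) * phi p n k i (take k (Mbars p (Suc n) z) ! j) = 0"
      using phi_gen[OF p j kn] by simp
  qed
  finally show ?thesis .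
qed

end


lemma lookup_phi: "lk (phi p n k i r) \<gamma> = (\<Sum>\<alpha>\<in>{\<alpha>\<in>ks r. beta n k \<alpha> = \<gamma>}. cc p k i \<alpha> * lk r \<alpha>)"
proof -
  have "lk (phi p n k i r) \<gamma> = (\<Sum>\<alpha>\<in>ks r. if beta n k \<alpha> = \<gamma> then cc p k i \<alpha> * lk r \<alpha> else 0)"
    by (simp add: phi_def mmap_def lookup_sum lookup_single when_def)
  also have "\<dots> = (\<Sum>\<alpha>\<in>{\<alpha>\<in>ks r. beta n k \<alpha> = \<gamma>}. cc p k i \<alpha> * lk r \<alpha>)"
    by (simp add: sum.inter_filter)
  finally show ?thesis .
qed

lemma char_sum:
  assumes p: "0 < p"
  shows "(\<Sum>i\<in>PiE {..<k::nat} (\<lambda>_. {..<p}). zeta p ^ (\<Sum>j<k. i j * (c j::nat))) =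
         (\<Prod>j<k. if p dvd c j then of_nat p else 0)"
proof -
  have "(\<Sum>i\<in>PiE {..<k} (\<lambda>_. {..<p}). zeta p ^ (\<Sum>j<k. i j * c j)) =
        (\<Sum>i\<in>PiE {..<k} (\<lambda>_. {..<p}). \<Prod>j<k. zeta p ^ (i j * c j))"
    by (simp add: power_sum)
  also have "\<dots> = (\<Prod>j<k. \<Sum>t<p. zeta p ^ (t * c j))"
    by (rule prod_sum_PiE[symmetric]) auto
  also have "\<dots> = (\<Prod>j<k. if p dvd c j then of_nat p else 0)"
    by (simp add: zeta_sum[OF p])
  finally show ?thesis .
qed

lemma eq_of_beta:
  assumes kn: "k \<le> n" and b: "beta n k \<alpha> = beta n k \<alpha>0" and e: "\<forall>j<k. lk \<alpha> j = lk \<alpha>0 j"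
  shows "\<alpha> = \<alpha>0"
proof (rule poly_mapping_eqI)
  fix t
  have bt: "lk (beta n k \<alpha>) t = lk (beta n k \<alpha>0) t" using b by simp
  have bn: "lk (beta n k \<alpha>) n = lk (beta n k \<alpha>0) n" using b by simp
  have s: "(\<Sum>j<k. lk \<alpha> j) = (\<Sum>j<k. lk \<alpha>0 j)" using e by (intro sum.cong) auto
  show "lk \<alpha> t = lk \<alpha>0 t"
  proof (cases "t < k")
    case True then show ?thesis using e by simp
  next
    case False
    show ?thesis
    proof (cases "t = n")
      case True
      then show ?thesis using bn s kn False by (simp add: lookup_beta)
    next
      case False2: False
      then show ?thesis using bt False by (simp add: lookup_beta)
    qed
  qed
qed

context
  fixes p n :: nat and z :: "nat \<Rightarrow> complex"
  assumes p: "0 < p"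
begin

lemma dft:
  assumes kn: "k \<le> n" and red: "\<forall>\<alpha>\<in>ks r. \<forall>t<k. lk \<alpha> t < p"
    and zr: "\<forall>i\<in>PiE {..<k} (\<lambda>_. {..<p}). phi p n k i r = 0"
  shows "r = 0"
proof (rule ccontr)
  assume "r \<noteq> 0"
  then obtain \<alpha>0 where a0: "\<alpha>0 \<in> ks r" by (metis keys_eq_empty ex_in_conv)
  define K where "K = {\<alpha>\<in>ks r. beta n k \<alpha> = beta n k \<alpha>0}"
  define c where "c \<alpha> j = lk \<alpha> j + (p - 1) * lk \<alpha>0 j" for \<alpha> j
  define PE where "PE = PiE {..<k} (\<lambda>_. {..<p::nat})"
  define w where "w i = zeta p ^ (\<Sum>j<k. i j * ((p - 1) * lk \<alpha>0 j))" for i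
  have finK: "finite K" unfolding K_def by simp
  have a0K: "\<alpha>0 \<in> K" using a0 unfolding K_def by simp
  have S0: "(\<Sum>\<alpha>\<in>K. cc p k i \<alpha> * lk r \<alpha>) = 0" if "i \<in> PE" for i
    using zr that lookup_phi[of p n k i r "beta n k \<alpha>0"] unfolding K_def PE_def by simp
  have wc: "w i * cc p k i \<alpha> = zeta p ^ (\<Sum>j<k. i j * c \<alpha> j)" for i \<alpha>
  proof -
    have "(\<Sum>j<k. i j * ((p - 1) * lk \<alpha>0 j)) + (\<Sum>j<k. i j * lk \<alpha> j) = (\<Sum>j<k. i j * c \<alpha> j)"
      unfolding sum.distrib[symmetric] c_def by (rule sum.cong) (simp_all add: distrib_left)
    then show ?thesis unfolding w_def cc_def by (metis power_add)
  qed
  have "0 = (\<Sum>i\<in>PE. w i * (\<Sum>\<alpha>\<in>K. cc p k i \<alpha> * lk r \<alpha>))" using S0 by simp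
  also have "\<dots> = (\<Sum>i\<in>PE. \<Sum>\<alpha>\<in>K. lk r \<alpha> * (w i * cc p k i \<alpha>))"
    by (simp add: sum_distrib_left mult_ac)
  also have "\<dots> = (\<Sum>\<alpha>\<in>K. lk r \<alpha> * (\<Sum>i\<in>PE. zeta p ^ (\<Sum>j<k. i j * c \<alpha> j)))"
    by (subst sum.swap) (simp add: sum_distrib_left wc)
  also have "\<dots> = (\<Sum>\<alpha>\<in>K. lk r \<alpha> * (\<Prod>j<k. if p dvd c \<alpha> j then of_nat p else 0))"
    unfolding PE_def by (simp add: char_sum[OF p])
  also have "\<dots> = lk r \<alpha>0 * (\<Prod>j<k. if p dvd c \<alpha>0 j then of_nat p else 0)"
  proof -
   have "\<forall>\<alpha>\<in>K - {\<alpha>0}. lk r \<alpha> * (\<Prod>j<k. if p dvd c \<alpha> j then of_nat p else 0) = (0::complex)"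
   proof
    fix \<alpha> assume "\<alpha> \<in> K - {\<alpha>0}"
    then have aK: "\<alpha> \<in> K" and ne: "\<alpha> \<noteq> \<alpha>0" by auto
    have "\<exists>j<k. \<not> p dvd c \<alpha> j"
    proof (rule ccontr)
      assume "\<not> (\<exists>j<k. \<not> p dvd c \<alpha> j)"
      then have "\<forall>j<k. lk \<alpha> j = lk \<alpha>0 j"
        using red aK a0 dvd_lt_eq[OF p] unfolding K_def c_def by auto
      then have "\<alpha> = \<alpha>0" using eq_of_beta[OF kn] aK unfolding K_def by auto
      then show False using ne by simp
    qed
    then have "(\<Prod>j<k. if p dvd c \<alpha> j then of_nat p else 0 :: complex) = 0"
      by (auto simp: prod_zero_iff)
    then show "lk r \<alpha> * (\<Prod>j<k. if p dvd c \<alpha> j then of_nat p else 0) = 0" by simp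
   qed
   then have "(\<Sum>\<alpha>\<in>K - {\<alpha>0}. lk r \<alpha> * (\<Prod>j<k. if p dvd c \<alpha> j then of_nat p else 0)) = (0::complex)"
     by (rule sum.neutral)
   then show ?thesis using sum.remove[OF finK a0K, of "\<lambda>\<alpha>. lk r \<alpha> * (\<Prod>j<k. if p dvd c \<alpha> j then of_nat p else 0)"] by simp
  qed
  also have "(\<Prod>j<k. if p dvd c \<alpha>0 j then of_nat p else 0) = (of_nat p :: complex) ^ k"
  proof -
    have "\<And>j. p dvd c \<alpha>0 j"
    proof -
      fix j
      have "c \<alpha>0 j = (1 + (p - 1)) * lk \<alpha>0 j" unfolding c_def by (simp add: distrib_right)
      also have "1 + (p - 1) = p" using p by simp
      finally have "c \<alpha>0 j = p * lk \<alpha>0 j" .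
      then show "p dvd c \<alpha>0 j" by simp
    qed
    then show ?thesis by simp
  qed
  finally have "lk r \<alpha>0 = 0" using p by simp
  then show False using a0 by (simp add: in_keys_iff)
qed

lemma key:
  assumes kn: "k \<le> n" and f: "in_vars (Suc n) f"
    and zf: "\<forall>i\<in>PiE {..<k} (\<lambda>_. {..<p}). phi p n k i f = 0"
  shows "f \<in> II p n z k"
proof -
  define r where "r = (\<Sum>\<alpha>\<in>ks f. sng (rho p n k \<alpha>) (lk f \<alpha>))"
  have "f - r = (\<Sum>\<alpha>\<in>ks f. sng \<alpha> (lk f \<alpha>)) - r" using poly_sum_single by metis
  also have "\<dots> = (\<Sum>\<alpha>\<in>ks f. pconst (lk f \<alpha>) * (mon \<alpha> - mon (rho p n k \<alpha>)))"
    unfolding r_def by (simp add: sum_subtractf[symmetric] single_as_mon right_diff_distrib)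
  also have "\<dots> \<in> II p n z k"
  proof (rule ideal_sum)
    fix \<alpha> assume "\<alpha> \<in> ks f"
    then have "ks \<alpha> \<subseteq> {..<Suc n}" using f by (auto simp: in_vars_def)
    then show "pconst (lk f \<alpha>) * (mon \<alpha> - mon (rho p n k \<alpha>)) \<in> II p n z k"
      by (intro ideal_mult in_vars_pconst rho_in_II[OF p order_refl kn])
  qed
  finally have diff: "f - r \<in> II p n z k" .
  have red: "\<forall>\<alpha>\<in>ks r. \<forall>t<k. lk \<alpha> t < p"
  proof (intro ballI allI impI)
    fix \<alpha> t assume a: "\<alpha> \<in> ks r" and t: "t < k"
    have "ks r \<subseteq> (\<Union>\<beta>\<in>ks f. ks (sng (rho p n k \<beta>) (lk f \<beta>)))" unfolding r_def by (rule keys_sum)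
    then obtain \<beta> where "\<alpha> = rho p n k \<beta>" using a by (auto split: if_splits)
    then show "lk \<alpha> t < p" using rho_reduced[OF p kn t] by simp
  qed
  have "\<forall>i\<in>PiE {..<k} (\<lambda>_. {..<p}). phi p n k i r = 0"
  proof
    fix i assume i: "i \<in> PiE {..<k} (\<lambda>_. {..<p})"
    have "phi p n k i r = phi p n k i f - phi p n k i (f - r)" by (simp add: phi_diff)
    then show "phi p n k i r = 0" using zf i phi_II[OF p kn diff] by simp
  qed
  then have "r = 0" using dft[OF kn red] by simp
  then show ?thesis using diff by simp
qed

end


lemma pconst_mult: "pconst a * pconst b = pconst (a * b)"
  by (simp add: pconst_def mult_single)
lemma pconst_add: "pconst a + pconst b = pconst (a + b)"
  by (simp add: pconst_def single_add)
lemma pconst_diff: "pconst a - pconst b = pconst (a - b)"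
  by (simp add: pconst_def single_diff)
lemma pconst_one: "pconst 1 = 1" by (simp add: pconst_def)
lemma pconst_pow: "pconst a ^ e = pconst (a ^ e)"
  by (induction e) (simp_all add: pconst_one pconst_mult)
lemma pconst_sum: "pconst (\<Sum>x\<in>A. f x) = (\<Sum>x\<in>A. pconst (f x))"
  by (induction A rule: infinite_finite_induct) (simp_all add: pconst_def single_add)

lemma pvar_mon: "pvar j = mon (sng j 1)" by (simp add: pvar_def mon_def)

lemma phi_pconst: "phi p n k i (pconst c) = pconst c"
  by (simp add: pconst_def phi_single beta_zero cc_zero)

lemma phi_pvar_lt: "j < k \<Longrightarrow> k \<le> n \<Longrightarrow> phi p n k i (pvar j) = pconst (zeta p ^ i j) * pvar n"
proof -
  assume a: "j < k" "k \<le> n"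
  have "phi p n k i (pvar j) = sng (sng n 1) (zeta p ^ i j)"
    using a by (simp add: pvar_def phi_single beta_single_lt cc_single_lt)
  then show ?thesis by (simp add: single_as_mon pvar_mon)
qed

lemma phi_pvar_ge: "k \<le> j \<Longrightarrow> phi p n k i (pvar j) = pvar j"
  by (simp add: pvar_def phi_single beta_single_ge cc_single_ge)

lemma phi_lin: "phi p n n i (\<Sum>j<Suc n. pconst (z j) * pvar j) =
    pconst ((\<Sum>j<n. z j * zeta p ^ i j) + z n) * pvar n"
proof -
  have "phi p n n i (\<Sum>j<Suc n. pconst (z j) * pvar j) =
     (\<Sum>j<n. phi p n n i (pconst (z j) * pvar j)) + phi p n n i (pconst (z n) * pvar n)"
    by (simp add: phi_sum phi_add)
  also have "(\<Sum>j<n. phi p n n i (pconst (z j) * pvar j)) = (\<Sum>j<n. pconst (z j) * (pconst (zeta p ^ i j) * pvar n))"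
    by (rule sum.cong) (simp_all add: phi_mult phi_pconst phi_pvar_lt)
  also have "phi p n n i (pconst (z n) * pvar n) = pconst (z n) * pvar n"
    by (simp add: phi_mult phi_pconst phi_pvar_ge)
  also have "(\<Sum>j<n. pconst (z j) * (pconst (zeta p ^ i j) * pvar n)) = pconst (\<Sum>j<n. z j * zeta p ^ i j) * pvar n"
    by (simp add: pconst_sum sum_distrib_right mult.assoc[symmetric] pconst_mult)
  also have "pconst (\<Sum>j<n. z j * zeta p ^ i j) * pvar n + pconst (z n) * pvar n =
     pconst ((\<Sum>j<n. z j * zeta p ^ i j) + z n) * pvar n"
    by (simp add: distrib_right pconst_add[symmetric])
  finally show ?thesis .
qed

lemma phi_Mlast: "phi p n n i (Mbar p (Suc n) z n) =
   pconst (1 - ((\<Sum>j<n. z j * zeta p ^ i j) + z n) ^ p) * pvar n ^ p"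
proof -
  let ?w = "(\<Sum>j<n. z j * zeta p ^ i j) + z n"
  have "Mbar p (Suc n) z n = pvar n ^ p - (\<Sum>j<Suc n. pconst (z j) * pvar j) ^ p"
    by (simp add: Mbar_def)
  then have "phi p n n i (Mbar p (Suc n) z n) = pvar n ^ p - (pconst ?w * pvar n) ^ p"
    by (simp only: phi_diff phi_pow phi_lin phi_pvar_ge[OF order_refl])
  also have "\<dots> = pconst (1 - ?w ^ p) * pvar n ^ p"
    by (simp add: power_mult_distrib pconst_pow pconst_diff[symmetric] pconst_one left_diff_distrib)
  finally show ?thesis .
qed

lemma pconst_mon_ne: "c \<noteq> 0 \<Longrightarrow> pconst c * mon \<alpha> \<noteq> 0"
  by (metis single_as_mon lookup_single_eq lookup_zero)

lemma Rval_root: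
  assumes p: "0 < p" and R: "Rval p (Suc n) z \<noteq> 0" and i: "i \<in> PiE {..<n} (\<lambda>_. {..<p})"
  shows "((\<Sum>j<n. z j * zeta p ^ i j) + z n) ^ p \<noteq> 1"
proof
  let ?w = "(\<Sum>j<n. z j * zeta p ^ i j) + z n"
  assume "?w ^ p = 1"
  then obtain l where l: "l < p" "?w = zeta p ^ l" using root_unity_zeta[OF p] by blast
  define t where "t = p - l"
  have t: "1 \<le> t" "t \<le> p" using l unfolding t_def by auto
  have tw: "zeta p ^ t * ?w = 1" using l p zeta_pow_p[OF p] by (simp add: t_def power_add[symmetric])
  define \<iota> where "\<iota> j = (if j < n then (i j + t - 1) mod p + 1 else if j = n then t else undefined)" for j
  have \<iota>: "\<iota> \<in> {..<Suc n} \<rightarrow>\<^sub>E {1..p}"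
    using t p unfolding \<iota>_def by (auto simp: PiE_iff Suc_le_eq extensional_def)
  have zi: "zeta p ^ \<iota> j = zeta p ^ (i j + t)" if "j < n" for j
  proof -
    have "zeta p ^ \<iota> j = zeta p ^ ((i j + t - 1) mod p) * zeta p" using that by (simp add: \<iota>_def)
    also have "\<dots> = zeta p ^ (i j + t - 1) * zeta p" using zeta_pow_mod[OF p, of "i j + t - 1"] by simp
    also have "\<dots> = zeta p ^ (i j + t)" using t by (simp add: power_Suc2[symmetric])
    finally show ?thesis .
  qed
  have in_: "\<iota> n = t" by (simp add: \<iota>_def)
  have s1: "(\<Sum>j<n. zeta p ^ \<iota> j * z j) = (\<Sum>j<n. zeta p ^ (i j + t) * z j)"
    by (rule sum.cong[OF refl]) (simp add: zi)
  have "(\<Sum>j<Suc n. zeta p ^ \<iota> j * z j) = (\<Sum>j<n. zeta p ^ (i j + t) * z j) + zeta p ^ t * z n"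
    using s1 in_ by simp
  also have "\<dots> = zeta p ^ t * ?w"
    by (simp add: power_add sum_distrib_left distrib_left mult_ac)
  finally have "1 - (\<Sum>j<Suc n. zeta p ^ \<iota> j * z j) = 0" using tw by simp
  then have "Rval p (Suc n) z = 0" unfolding Rval_def
    using \<iota> by (intro prod_zero) (auto intro!: bexI[of _ \<iota>] finite_PiE)
  then show False using R by simp
qed

lemma keys_Mbar_nz:
  assumes "0 < p" "homog p f" shows "0 \<notin> ks f"
  using assms by (auto simp: homog_def)

lemma homog_Mbar: "homog p (Mbar p m z i)"
proof (cases "i < m - 1")
  case True
  then show ?thesis unfolding Mbar_def pvar_pow using True by (simp add: homog_diff homog_mon)
next
  case False
  have h1: "homog 1 (pconst (z j) * pvar j)" for j
    by (rule homog_pconst_mult) (simp add: pvar_mon homog_mon)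
  have "homog (p * 1) ((\<Sum>j<m. pconst (z j) * pvar j) ^ p)"
    by (rule homog_pow, rule homog_sum, rule h1)
  then show ?thesis using False unfolding Mbar_def pvar_pow
    by (simp add: homog_diff homog_mon)
qed

lemma nat_pm_add_zero: "(a::nat \<Rightarrow>\<^sub>0 nat) + b = 0 \<Longrightarrow> b = 0"
proof (rule poly_mapping_eqI)
  fix t assume "a + b = 0"
  then have "lk (a + b) t = 0" by simp
  then show "lk b t = lk 0 t" by (simp add: lookup_add)
qed

lemma lookup0_mult: "0 \<notin> ks g \<Longrightarrow> lk ((h::cpoly) * g) 0 = 0"
proof -
  assume g: "0 \<notin> ks g"
  have "0 \<notin> ks (h * g)"
  proof
    assume "0 \<in> ks (h * g)"
    then obtain a b where "0 = a + b" "b \<in> ks g" using keys_mult[of h g] by blast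
    then show False using g nat_pm_add_zero by metis
  qed
  then show ?thesis by (simp add: in_keys_iff)
qed

lemma one_notin_ideal:
  assumes p: "0 < p" and h: "\<forall>i<length gs. homog p (gs ! i)"
  shows "1 \<notin> gen_ideal m gs"
proof
  assume "1 \<in> gen_ideal m gs"
  then obtain h where e: "1 = (\<Sum>i<length gs. h i * gs ! i)" unfolding gen_ideal_def by auto
  have "lk (1::cpoly) 0 = (\<Sum>i<length gs. lk (h i * gs ! i) 0)" unfolding e by (simp add: lookup_sum)
  also have "\<dots> = 0" using h keys_Mbar_nz[OF p] lookup0_mult by (intro sum.neutral) auto
  finally show False by simp
qed

context
  fixes p n :: nat and z :: "nat \<Rightarrow> complex"
  assumes p: "0 < p" and R: "Rval p (Suc n) z \<noteq> 0"
begin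

lemma phi_g_ne:
  assumes k: "k < Suc n" and i: "i \<in> PiE {..<k} (\<lambda>_. {..<p})"
  shows "phi p n k i (Mbar p (Suc n) z k) \<noteq> 0"
proof (cases "k < n")
  case True
  have "phi p n k i (Mbar p (Suc n) z k) = mon (sng k p) - mon (sng n p)"
    using True by (simp add: Mbar_lt mon_def phi_diff phi_single beta_single_ge cc_single_ge)
  moreover have "mon (sng k p) \<noteq> mon (sng n p)"
  proof
    assume "mon (sng k p) = mon (sng n p)"
    then have "lk (mon (sng k p)) (sng k p) = lk (mon (sng n p)) (sng k p)" by simp
    then have "sng n p = sng k p" by (simp add: mon_def lookup_single when_def split: if_splits)
    then have "lk (sng k p) k = lk (sng n p) k" by simp
    then show False using True p by (simp add: lookup_single when_def)
  qed
  ultimately show ?thesis by simp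
next
  case False
  then have kn: "k = n" using k by simp
  have w: "1 - ((\<Sum>j<n. z j * zeta p ^ i j) + z n) ^ p \<noteq> 0"
    using Rval_root[OF p R] i kn by simp
  show ?thesis unfolding kn phi_Mlast pvar_pow using pconst_mon_ne[OF w] .
qed

lemma reg_step:
  assumes k: "k < Suc n" and f: "in_vars (Suc n) f" and fg: "f * Mbar p (Suc n) z k \<in> II p n z k"
  shows "f \<in> II p n z k"
proof (rule key[OF p _ f])
  show "k \<le> n" using k by simp
  show "\<forall>i\<in>PiE {..<k} (\<lambda>_. {..<p}). phi p n k i f = 0"
  proof
    fix i assume i: "i \<in> PiE {..<k} (\<lambda>_. {..<p})"
    have "phi p n k i f * phi p n k i (Mbar p (Suc n) z k) = 0"
      using phi_II[OF p _ fg] k by (simp add: phi_mult)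
    then show "phi p n k i f = 0" using phi_g_ne[OF k i] by simp
  qed
qed

lemma regular: "regular_sequence (Suc n) (Mbars p (Suc n) z)"
  unfolding regular_sequence_def
proof (intro conjI allI impI)
  fix k f
  assume k: "k < length (Mbars p (Suc n) z)" and
    h: "in_vars (Suc n) f \<and> f * Mbars p (Suc n) z ! k \<in> gen_ideal (Suc n) (take k (Mbars p (Suc n) z))"
  then show "f \<in> gen_ideal (Suc n) (take k (Mbars p (Suc n) z))"
    using reg_step[of k f] by (simp add: nth_Mbars)
next
  show "1 \<notin> gen_ideal (Suc n) (Mbars p (Suc n) z)"
    by (rule one_notin_ideal[OF p]) (simp add: nth_Mbars homog_Mbar)
qed

end


lemma vs_cscale: "vector_space cscale"
proof
  fix a b :: complex and x y :: cpoly
  show "cscale a (x + y) = cscale a x + cscale a y" by (simp add: cscale_pconst distrib_left)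
  show "cscale (a + b) x = cscale a x + cscale b x" by (simp add: cscale_pconst distrib_right pconst_add[symmetric])
  show "cscale a (cscale b x) = cscale (a * b) x" by (simp add: cscale_pconst mult.assoc[symmetric] pconst_mult)
  show "cscale 1 x = x" by (simp add: cscale_pconst pconst_one)
qed

interpretation vs: vector_space cscale by (rule vs_cscale)

lemma indep_by_keys:
  assumes one: "\<And>v. v \<in> B \<Longrightarrow> lk v (\<kappa> v) = 1"
    and zero: "\<And>v w. v \<in> B \<Longrightarrow> w \<in> B \<Longrightarrow> w \<noteq> v \<Longrightarrow> lk w (\<kappa> v) = 0"
  shows "\<not> vs.dependent B"
proof
  assume "vs.dependent B"
  then obtain T u v0 where T: "finite T" "T \<subseteq> B" and s: "(\<Sum>v\<in>T. cscale (u v) v) = 0"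
    and v0: "v0 \<in> T" "u v0 \<noteq> 0"
    unfolding vs.dependent_explicit by blast
  have "0 = lk (\<Sum>v\<in>T. cscale (u v) v) (\<kappa> v0)" using s by simp
  also have "\<dots> = (\<Sum>v\<in>T. u v * lk v (\<kappa> v0))" by (simp add: lookup_sum lookup_cscale)
  also have "\<dots> = u v0 * lk v0 (\<kappa> v0) + (\<Sum>v\<in>T - {v0}. u v * lk v (\<kappa> v0))"
    by (rule sum.remove[OF T(1) v0(1)])
  also have "(\<Sum>v\<in>T - {v0}. u v * lk v (\<kappa> v0)) = 0"
    using T v0 zero by (intro sum.neutral) auto
  also have "lk v0 (\<kappa> v0) = 1" using T v0 one by auto
  finally show False using v0 by simp
qed



lemma lookup_le_mdeg: "lk \<alpha> i \<le> mdeg \<alpha>"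
proof (cases "i \<in> ks \<alpha>")
  case True then show ?thesis unfolding mdeg_def by (intro member_le_sum) auto
next
  case False then show ?thesis by (simp add: in_keys_iff)
qed

lemma finite_mons:
  assumes S: "finite S"
  shows "finite {\<alpha>::nat \<Rightarrow>\<^sub>0 nat. ks \<alpha> \<subseteq> S \<and> mdeg \<alpha> = d}"
proof -
  let ?A = "{\<alpha>::nat \<Rightarrow>\<^sub>0 nat. ks \<alpha> \<subseteq> S \<and> mdeg \<alpha> = d}"
  let ?g = "\<lambda>\<alpha>::nat \<Rightarrow>\<^sub>0 nat. restrict (lk \<alpha>) S"
  have inj: "inj_on ?g ?A"
  proof (rule inj_onI)
    fix \<alpha> \<beta> assume a: "\<alpha> \<in> ?A" and b: "\<beta> \<in> ?A" and e: "?g \<alpha> = ?g \<beta>"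
    show "\<alpha> = \<beta>"
    proof (rule poly_mapping_eqI)
      fix t
      show "lk \<alpha> t = lk \<beta> t"
      proof (cases "t \<in> S")
        case True then show ?thesis using fun_cong[OF e, of t] by simp
      next
        case False then have "t \<notin> ks \<alpha>" "t \<notin> ks \<beta>" using a b by auto
        then show ?thesis by (simp add: in_keys_iff)
      qed
    qed
  qed
  have "?g ` ?A \<subseteq> PiE S (\<lambda>_. {..d})"
    using lookup_le_mdeg by (auto simp: PiE_iff)
  then have "finite (?g ` ?A)" by (rule finite_subset) (simp add: S finite_PiE)
  then show ?thesis using finite_imageD[OF _ inj] by blast
qed

lemma mon_inj: "mon \<alpha> = mon \<beta> \<Longrightarrow> \<alpha> = \<beta>"
proof -
  assume "mon \<alpha> = mon \<beta>"
  then have "lk (mon \<alpha>) \<alpha> = lk (mon \<beta>) \<alpha>" by simp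
  then show "\<alpha> = \<beta>" by (simp add: mon_def lookup_single when_def split: if_splits)
qed

lemma lookup_mon: "lk (mon \<beta>) \<alpha> = (if \<beta> = \<alpha> then 1 else 0)"
  by (simp add: mon_def lookup_single when_def)

lemma sum_cscale_expand: "f = (\<Sum>\<alpha>\<in>ks f. cscale (lk f \<alpha>) (mon \<alpha>))"
proof -
  have "f = (\<Sum>\<alpha>\<in>ks f. sng \<alpha> (lk f \<alpha>))" by (rule poly_sum_single)
  also have "\<dots> = (\<Sum>\<alpha>\<in>ks f. cscale (lk f \<alpha>) (mon \<alpha>))" by (simp add: single_as_mon cscale_pconst)
  finally show ?thesis .
qed

definition Md :: "nat \<Rightarrow> nat \<Rightarrow> (nat \<Rightarrow>\<^sub>0 nat) set" where
  "Md n d = {\<alpha>. ks \<alpha> \<subseteq> {..<Suc n} \<and> mdeg \<alpha> = d}"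

definition Rd :: "nat \<Rightarrow> nat \<Rightarrow> nat \<Rightarrow> (nat \<Rightarrow>\<^sub>0 nat) set" where
  "Rd p n d = {\<alpha>\<in>Md n d. \<forall>t<n. lk \<alpha> t < p}"

lemma finite_Md: "finite (Md n d)"
  unfolding Md_def by (rule finite_mons) simp

lemma keys_homog_part: "f \<in> homog_part (Suc n) d \<Longrightarrow> ks f \<subseteq> Md n d"
  by (auto simp: homog_part_def in_vars_def homog_def Md_def)

lemma dim_H: "vs.dim (homog_part (Suc n) d) = card (Md n d)"
proof (rule vs.dim_unique)
  show "mon ` Md n d \<subseteq> homog_part (Suc n) d"
    by (auto simp: Md_def homog_part_def intro: in_vars_mon homog_mon)
  show "homog_part (Suc n) d \<subseteq> vs.span (mon ` Md n d)"
  proof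
    fix f assume f: "f \<in> homog_part (Suc n) d"
    have "(\<Sum>\<alpha>\<in>ks f. cscale (lk f \<alpha>) (mon \<alpha>)) \<in> vs.span (mon ` Md n d)"
      using keys_homog_part[OF f] by (intro vs.span_sum vs.span_scale vs.span_base) auto
    then show "f \<in> vs.span (mon ` Md n d)" using sum_cscale_expand[of f] by simp
  qed
  show "\<not> vs.dependent (mon ` Md n d)"
  proof (rule indep_by_keys[where \<kappa> = "\<lambda>v. SOME \<alpha>. v = mon \<alpha>"])
    fix v assume "v \<in> mon ` Md n d"
    then obtain \<alpha> where v: "v = mon \<alpha>" by auto
    have "(SOME \<alpha>'. v = mon \<alpha>') = \<alpha>"
    proof (rule some_equality)
      show "v = mon \<alpha>" by (rule v)
    next
      fix \<alpha>' assume "v = mon \<alpha>'" then show "\<alpha>' = \<alpha>" using v mon_inj by metis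
    qed
    then show "lk v (SOME \<alpha>. v = mon \<alpha>) = 1" using v by (simp add: lookup_mon)
  next
    fix v w assume "v \<in> mon ` Md n d" "w \<in> mon ` Md n d" "w \<noteq> v"
    then obtain \<alpha> \<beta> where v: "v = mon \<alpha>" and w: "w = mon \<beta>" and ne: "\<beta> \<noteq> \<alpha>" by auto
    have "(SOME \<alpha>'. v = mon \<alpha>') = \<alpha>"
    proof (rule some_equality)
      show "v = mon \<alpha>" by (rule v)
    next
      fix \<alpha>' assume "v = mon \<alpha>'" then show "\<alpha>' = \<alpha>" using v mon_inj by metis
    qed
    then show "lk w (SOME \<alpha>. v = mon \<alpha>) = 0" using w ne by (simp add: lookup_mon)
  qed
  show "card (mon ` Md n d) = card (Md n d)"
    by (rule card_image) (auto intro: inj_onI mon_inj)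
qed



context
  fixes p n :: nat and z :: "nat \<Rightarrow> complex"
  assumes p: "0 < p"
begin

lemma ideal_expand:
  assumes kn: "k \<le> n" and f: "in_vars (Suc n) f" and fI: "f \<in> II p n z k"
  shows "f = (\<Sum>\<alpha>\<in>ks f. pconst (lk f \<alpha>) * (mon \<alpha> - mon (rho p n k \<alpha>)))"
proof -
  define r where "r = (\<Sum>\<alpha>\<in>ks f. sng (rho p n k \<alpha>) (lk f \<alpha>))"
  have "f - r = (\<Sum>\<alpha>\<in>ks f. sng \<alpha> (lk f \<alpha>)) - r" using poly_sum_single by metis
  also have "\<dots> = (\<Sum>\<alpha>\<in>ks f. pconst (lk f \<alpha>) * (mon \<alpha> - mon (rho p n k \<alpha>)))"
    unfolding r_def by (simp add: sum_subtractf[symmetric] single_as_mon right_diff_distrib)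
  finally have fr: "f - r = (\<Sum>\<alpha>\<in>ks f. pconst (lk f \<alpha>) * (mon \<alpha> - mon (rho p n k \<alpha>)))" .
  have "(\<Sum>\<alpha>\<in>ks f. pconst (lk f \<alpha>) * (mon \<alpha> - mon (rho p n k \<alpha>))) \<in> II p n z k"
  proof (rule ideal_sum)
    fix \<alpha> assume "\<alpha> \<in> ks f"
    then have "ks \<alpha> \<subseteq> {..<Suc n}" using f by (auto simp: in_vars_def)
    then show "pconst (lk f \<alpha>) * (mon \<alpha> - mon (rho p n k \<alpha>)) \<in> II p n z k"
      by (intro ideal_mult in_vars_pconst rho_in_II[OF p order_refl kn])
  qed
  then have diff: "f - r \<in> II p n z k" using fr by simp
  have rI: "r \<in> II p n z k" using ideal_diff[OF fI diff] by simp
  have red: "\<forall>\<alpha>\<in>ks r. \<forall>t<k. lk \<alpha> t < p"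
  proof (intro ballI allI impI)
    fix \<alpha> t assume a: "\<alpha> \<in> ks r" and t: "t < k"
    have "ks r \<subseteq> (\<Union>\<beta>\<in>ks f. ks (sng (rho p n k \<beta>) (lk f \<beta>)))" unfolding r_def by (rule keys_sum)
    then obtain \<beta> where "\<alpha> = rho p n k \<beta>" using a by (auto split: if_splits)
    then show "lk \<alpha> t < p" using rho_reduced[OF p kn t] by simp
  qed
  have "\<forall>i\<in>PiE {..<k} (\<lambda>_. {..<p}). phi p n k i r = 0"
    using phi_II[OF p kn rI] by simp
  then have "r = 0" using dft[OF p kn red] by simp
  then show ?thesis using fr by simp
qed

definition vv :: "(nat \<Rightarrow>\<^sub>0 nat) \<Rightarrow> cpoly" where
  "vv \<alpha> = mon \<alpha> - mon (rho p n n \<alpha>)"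

abbreviation Nd :: "nat \<Rightarrow> (nat \<Rightarrow>\<^sub>0 nat) set" where
  "Nd d \<equiv> Md n d - Rd p n d"

lemma Nd_not_red: "\<alpha> \<in> Nd d \<Longrightarrow> \<exists>t<n. p \<le> lk \<alpha> t"
  by (auto simp: Rd_def not_less)

lemma rho_ne_Nd: "\<alpha> \<in> Nd d \<Longrightarrow> rho p n n \<beta> \<noteq> \<alpha>"
proof
  assume a: "\<alpha> \<in> Nd d" and e: "rho p n n \<beta> = \<alpha>"
  obtain t where t: "t < n" "p \<le> lk \<alpha> t" using Nd_not_red[OF a] by blast
  have "lk (rho p n n \<beta>) t < p" by (rule rho_reduced[OF p order_refl t(1)])
  then show False using e t by simp
qed

lemma lk_vv_self: "\<alpha> \<in> Nd d \<Longrightarrow> lk (vv \<alpha>) \<alpha> = 1"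
  using rho_ne_Nd[of \<alpha> d \<alpha>] by (simp add: vv_def lookup_mon lookup_minus)

lemma lk_vv_other: "\<alpha> \<in> Nd d \<Longrightarrow> \<beta> \<noteq> \<alpha> \<Longrightarrow> lk (vv \<beta>) \<alpha> = 0"
  using rho_ne_Nd[of \<alpha> d \<beta>] by (simp add: vv_def lookup_mon lookup_minus)

lemma vv_inj: "inj_on vv (Nd d)"
proof (rule inj_onI)
  fix \<alpha> \<beta> assume a: "\<alpha> \<in> Nd d" and b: "\<beta> \<in> Nd d" and e: "vv \<alpha> = vv \<beta>"
  show "\<alpha> = \<beta>"
  proof (rule ccontr)
    assume "\<alpha> \<noteq> \<beta>"
    then have "lk (vv \<beta>) \<alpha> = 0" using lk_vv_other[OF a] by simp
    then show False using lk_vv_self[OF a] e by simp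
  qed
qed

lemma dim_HI: "vs.dim (homog_part (Suc n) d \<inter> II p n z n) = card (Nd d)"
proof (rule vs.dim_unique)
  show "vv ` Nd d \<subseteq> homog_part (Suc n) d \<inter> II p n z n"
  proof
    fix v assume "v \<in> vv ` Nd d"
    then obtain \<alpha> where a: "\<alpha> \<in> Nd d" and v: "v = vv \<alpha>" by auto
    have k: "ks \<alpha> \<subseteq> {..<Suc n}" and dg: "mdeg \<alpha> = d" using a by (auto simp: Md_def)
    have kr: "ks (rho p n n \<alpha>) \<subseteq> {..<Suc n}" by (rule keys_rho[OF order_refl k])
    have "in_vars (Suc n) v" unfolding v vv_def by (intro in_vars_diff in_vars_mon k kr)
    moreover have "homog d v" unfolding v vv_def using dg mdeg_rho[of n n p \<alpha>]
      by (intro homog_diff homog_mon) simp_all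
    moreover have "v \<in> II p n z n" unfolding v vv_def by (rule rho_in_II[OF p order_refl order_refl k])
    ultimately show "v \<in> homog_part (Suc n) d \<inter> II p n z n" by (simp add: homog_part_def)
  qed
  show "homog_part (Suc n) d \<inter> II p n z n \<subseteq> vs.span (vv ` Nd d)"
  proof
    fix f assume f: "f \<in> homog_part (Suc n) d \<inter> II p n z n"
    have fv: "in_vars (Suc n) f" using f by (simp add: homog_part_def)
    have "f = (\<Sum>\<alpha>\<in>ks f. pconst (lk f \<alpha>) * vv \<alpha>)"
      using ideal_expand[OF order_refl fv] f by (simp add: vv_def)
    also have "\<dots> \<in> vs.span (vv ` Nd d)"
    proof (rule vs.span_sum)
      fix \<alpha> assume a: "\<alpha> \<in> ks f"
      then have aM: "\<alpha> \<in> Md n d" using keys_homog_part f by blast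
      show "pconst (lk f \<alpha>) * vv \<alpha> \<in> vs.span (vv ` Nd d)"
      proof (cases "\<alpha> \<in> Rd p n d")
        case True
        then have "rho p n n \<alpha> = \<alpha>" by (intro rho_id) (auto simp: Rd_def)
        then have "vv \<alpha> = 0" by (simp add: vv_def)
        then show ?thesis by (simp add: vs.span_zero)
      next
        case False
        then have "vv \<alpha> \<in> vv ` Nd d" using aM by auto
        then show ?thesis unfolding cscale_pconst[symmetric] by (intro vs.span_scale vs.span_base)
      qed
    qed
    finally show "f \<in> vs.span (vv ` Nd d)" .
  qed
  show "\<not> vs.dependent (vv ` Nd d)"
  proof (rule indep_by_keys[where \<kappa> = "\<lambda>v. SOME \<alpha>. \<alpha> \<in> Nd d \<and> v = vv \<alpha>"])
    fix v assume "v \<in> vv ` Nd d"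
    then obtain \<alpha> where a: "\<alpha> \<in> Nd d" and v: "v = vv \<alpha>" by auto
    have "(SOME \<alpha>'. \<alpha>' \<in> Nd d \<and> v = vv \<alpha>') = \<alpha>"
    proof (rule some_equality)
      show "\<alpha> \<in> Nd d \<and> v = vv \<alpha>" using a v by simp
    next
      fix \<alpha>' assume "\<alpha>' \<in> Nd d \<and> v = vv \<alpha>'" then show "\<alpha>' = \<alpha>"
        using v a vv_inj[of d] by (auto dest: inj_onD)
    qed
    then show "lk v (SOME \<alpha>. \<alpha> \<in> Nd d \<and> v = vv \<alpha>) = 1" using v lk_vv_self[OF a] by simp
  next
    fix v w assume "v \<in> vv ` Nd d" "w \<in> vv ` Nd d" "w \<noteq> v"
    then obtain \<alpha> \<beta> where a: "\<alpha> \<in> Nd d" and v: "v = vv \<alpha>" and w: "w = vv \<beta>" and ne: "\<beta> \<noteq> \<alpha>" by auto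
    have "(SOME \<alpha>'. \<alpha>' \<in> Nd d \<and> v = vv \<alpha>') = \<alpha>"
    proof (rule some_equality)
      show "\<alpha> \<in> Nd d \<and> v = vv \<alpha>" using a v by simp
    next
      fix \<alpha>' assume "\<alpha>' \<in> Nd d \<and> v = vv \<alpha>'" then show "\<alpha>' = \<alpha>"
        using v a vv_inj[of d] by (auto dest: inj_onD)
    qed
    then show "lk w (SOME \<alpha>. \<alpha> \<in> Nd d \<and> v = vv \<alpha>) = 0" using w lk_vv_other[OF a ne] by simp
  qed
  show "card (vv ` Nd d) = card (Nd d)"
    by (rule card_image[OF vv_inj])
qed

lemma quot_dim_eq: "quot_dim (Suc n) (II p n z n) d = card (Rd p n d)"
proof -
  have "quot_dim (Suc n) (II p n z n) d = card (Md n d) - card (Nd d)"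
    unfolding quot_dim_def dim_H dim_HI ..
  also have "\<dots> = card (Rd p n d)"
  proof -
    have "Rd p n d \<subseteq> Md n d" by (auto simp: Rd_def)
    then have "card (Nd d) = card (Md n d) - card (Rd p n d)"
      by (intro card_Diff_subset) (auto intro: finite_subset[OF _ finite_Md])
    moreover have "card (Rd p n d) \<le> card (Md n d)"
      using \<open>Rd p n d \<subseteq> Md n d\<close> finite_Md by (rule card_mono[rotated])
    ultimately show ?thesis by simp
  qed
  finally show ?thesis .
qed

end


unbundle fps_syntax

definition AA :: "nat \<Rightarrow> nat \<Rightarrow> nat \<Rightarrow> nat \<Rightarrow> (nat \<Rightarrow>\<^sub>0 nat) set" where
  "AA p n k d = {\<alpha>. ks \<alpha> \<subseteq> insert n {..<k} \<and> mdeg \<alpha> = d \<and> (\<forall>t<k. lk \<alpha> t < p)}"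

lemma finite_AA: "finite (AA p n k d)"
proof -
  have "AA p n k d \<subseteq> {\<alpha>. ks \<alpha> \<subseteq> insert n {..<k} \<and> mdeg \<alpha> = d}" by (auto simp: AA_def)
  then show ?thesis by (rule finite_subset) (rule finite_mons, simp)
qed

lemma AA_0: "AA p n 0 d = {sng n d}"
proof
  show "AA p n 0 d \<subseteq> {sng n d}"
  proof
    fix \<alpha> assume a: "\<alpha> \<in> AA p n 0 d"
    then have k: "ks \<alpha> \<subseteq> {n}" and dg: "mdeg \<alpha> = d" by (auto simp: AA_def)
    have e: "\<alpha> = sng n (lk \<alpha> n)"
    proof (rule poly_mapping_eqI)
      fix t show "lk \<alpha> t = lk (sng n (lk \<alpha> n)) t"
        using k by (cases "t = n") (auto simp: lookup_single in_keys_iff)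
    qed
    then have "mdeg \<alpha> = mdeg (sng n (lk \<alpha> n))" by (rule arg_cong)
    then have "lk \<alpha> n = d" using dg by simp
    from e have "\<alpha> = sng n d" unfolding \<open>lk \<alpha> n = d\<close> .
    then show "\<alpha> \<in> {sng n d}" by simp
  qed
  show "{sng n d} \<subseteq> AA p n 0 d" by (auto simp: AA_def)
qed

lemma lk_AA_k: "\<beta> \<in> AA p n k d' \<Longrightarrow> k \<noteq> n \<Longrightarrow> lk \<beta> k = 0"
  by (auto simp: AA_def in_keys_iff)

lemma AA_Suc:
  assumes kn: "k < n"
  shows "AA p n (Suc k) d = (\<Union>a\<in>{a\<in>{0..d}. a < p}. (\<lambda>\<beta>. \<beta> + sng k a) ` AA p n k (d - a))"
proof
  show "AA p n (Suc k) d \<subseteq> (\<Union>a\<in>{a\<in>{0..d}. a < p}. (\<lambda>\<beta>. \<beta> + sng k a) ` AA p n k (d - a))"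
  proof
    fix \<alpha> assume a: "\<alpha> \<in> AA p n (Suc k) d"
    let ?a = "lk \<alpha> k"
    let ?\<beta> = "Poly_Mapping.update k 0 \<alpha>"
    have e: "\<alpha> = ?\<beta> + sng k ?a"
      by (rule poly_mapping_eqI) (simp add: lookup_add lookup_update lookup_single when_def)
    have ad: "?a \<le> d" using a lookup_le_mdeg[of \<alpha> k] by (simp add: AA_def)
    have ap: "?a < p" using a by (simp add: AA_def)
    have "mdeg \<alpha> = mdeg (?\<beta> + sng k ?a)" using e by (rule arg_cong)
    then have "mdeg \<alpha> = mdeg ?\<beta> + ?a" by (simp only: mdeg_add mdeg_single)
    then have "mdeg ?\<beta> + ?a = d" using a by (simp add: AA_def)
    then have "mdeg ?\<beta> = d - ?a" by linarith
    moreover have "ks ?\<beta> \<subseteq> insert n {..<k}" using a kn by (auto simp: AA_def keys_update)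
    moreover have "\<forall>t<k. lk ?\<beta> t < p" using a by (auto simp: AA_def lookup_update)
    ultimately have "?\<beta> \<in> AA p n k (d - ?a)" by (simp add: AA_def)
    moreover have ad': "?a \<in> {a\<in>{0..d}. a < p}" using ad ap by simp
    ultimately have "\<alpha> \<in> (\<lambda>\<beta>. \<beta> + sng k ?a) ` AA p n k (d - ?a)" using e by (intro image_eqI) 
    then show "\<alpha> \<in> (\<Union>a\<in>{a\<in>{0..d}. a < p}. (\<lambda>\<beta>. \<beta> + sng k a) ` AA p n k (d - a))"
      by (rule UN_I[OF ad'])
  qed
  show "(\<Union>a\<in>{a\<in>{0..d}. a < p}. (\<lambda>\<beta>. \<beta> + sng k a) ` AA p n k (d - a)) \<subseteq> AA p n (Suc k) d"
  proof safe
    fix a \<beta> assume ad: "a \<in> {0..d}" and ap: "a < p" and b: "\<beta> \<in> AA p n k (d - a)"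
    have bk: "lk \<beta> k = 0" using lk_AA_k[OF b] kn by simp
    have "ks (\<beta> + sng k a) \<subseteq> insert n {..<Suc k}" using b by (auto simp: AA_def keys_add_nat)
    moreover have "mdeg (\<beta> + sng k a) = d" using b ad by (simp add: AA_def mdeg_add)
    moreover have "\<forall>t<Suc k. lk (\<beta> + sng k a) t < p"
      using b bk ap by (auto simp: AA_def lookup_add lookup_single when_def less_Suc_eq)
    ultimately show "\<beta> + sng k a \<in> AA p n (Suc k) d" by (simp add: AA_def)
  qed
qed

lemma card_AA_Suc:
  assumes kn: "k < n"
  shows "card (AA p n (Suc k) d) = (\<Sum>a\<in>{a\<in>{0..d}. a < p}. card (AA p n k (d - a)))"
proof -
  have "card (AA p n (Suc k) d) = (\<Sum>a\<in>{a\<in>{0..d}. a < p}. card ((\<lambda>\<beta>. \<beta> + sng k a) ` AA p n k (d - a)))"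
    unfolding AA_Suc[OF kn]
  proof (rule card_UN_disjoint)
    show "finite {a\<in>{0..d}. a < p}" by simp
    show "\<forall>i\<in>{a\<in>{0..d}. a < p}. finite ((\<lambda>\<beta>. \<beta> + sng k i) ` AA p n k (d - i))"
      by (simp add: finite_AA)
    show "\<forall>i\<in>{a\<in>{0..d}. a < p}. \<forall>j\<in>{a\<in>{0..d}. a < p}. i \<noteq> j \<longrightarrow>
      (\<lambda>\<beta>. \<beta> + sng k i) ` AA p n k (d - i) \<inter> (\<lambda>\<beta>. \<beta> + sng k j) ` AA p n k (d - j) = {}"
    proof (intro ballI impI)
      fix i j :: nat assume "i \<noteq> j"
      show "(\<lambda>\<beta>. \<beta> + sng k i) ` AA p n k (d - i) \<inter> (\<lambda>\<beta>. \<beta> + sng k j) ` AA p n k (d - j) = {}"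
      proof (rule ccontr)
        assume "(\<lambda>\<beta>. \<beta> + sng k i) ` AA p n k (d - i) \<inter> (\<lambda>\<beta>. \<beta> + sng k j) ` AA p n k (d - j) \<noteq> {}"
        then obtain \<beta> \<beta>' where b: "\<beta> \<in> AA p n k (d - i)" and b': "\<beta>' \<in> AA p n k (d - j)"
          and e: "\<beta> + sng k i = \<beta>' + sng k j" by blast
        have "lk (\<beta> + sng k i) k = lk (\<beta>' + sng k j) k" using e by simp
        then have "i = j" using lk_AA_k[OF b] lk_AA_k[OF b'] kn by (simp add: lookup_add)
        then show False using \<open>i \<noteq> j\<close> by simp
      qed
    qed
  qed
  also have "\<dots> = (\<Sum>a\<in>{a\<in>{0..d}. a < p}. card (AA p n k (d - a)))"
    by (intro sum.cong refl card_image inj_onI) simp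
  finally show ?thesis .
qed

definition Gp :: "nat \<Rightarrow> rat fps" where "Gp p = (\<Sum>i<p. fps_X ^ i)"
definition Hs :: "rat fps" where "Hs = Abs_fps (\<lambda>_. 1)"

lemma Gp_nth: "Gp p $ i = (if i < p then 1 else 0)"
proof -
  have "Gp p $ i = (\<Sum>t<p. if i = t then 1 else 0)" by (simp add: Gp_def fps_sum_nth)
  also have "\<dots> = (if i < p then 1 else 0)" by (simp add: sum.delta)
  finally show ?thesis .
qed

lemma coef_AA: "k \<le> n \<Longrightarrow> (Gp p ^ k * Hs) $ d = of_nat (card (AA p n k d))"
proof (induction k arbitrary: d)
  case 0 then show ?case by (simp add: AA_0 Hs_def)
next
  case (Suc k)
  then have kn: "k < n" "k \<le> n" by auto
  have "(Gp p ^ Suc k * Hs) $ d = (Gp p * (Gp p ^ k * Hs)) $ d" by (simp add: mult.assoc)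
  also have "\<dots> = (\<Sum>i=0..d. Gp p $ i * (Gp p ^ k * Hs) $ (d - i))" by (rule fps_mult_nth)
  also have "\<dots> = (\<Sum>i\<in>{0..d}. if i < p then of_nat (card (AA p n k (d - i))) else 0)"
    using Suc.IH[OF kn(2)] by (intro sum.cong refl) (simp add: Gp_nth)
  also have "\<dots> = (\<Sum>i\<in>{a\<in>{0..d}. a < p}. of_nat (card (AA p n k (d - i))))"
    by (rule sum.inter_filter[symmetric]) simp
  also have "\<dots> = of_nat (card (AA p n (Suc k) d))"
    by (simp add: card_AA_Suc[OF kn(1)])
  finally show ?case .
qed

lemma Hs_inv: "(1 - fps_X) * Hs = 1"
proof -
  have "Hs * inverse Hs = 1" by (rule inverse_mult_eq_1') (simp add: Hs_def)
  moreover have "inverse Hs = 1 - fps_X" unfolding Hs_def by (rule fps_inverse_gp')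
  ultimately show ?thesis by (metis mult.commute)
qed

lemma rcoef_eq: "rcoef p (Suc n) d = (Gp p ^ n * Hs) $ d"
proof -
  have one: "(1 :: rat fps) - fps_X ^ p = (1 - fps_X) * Gp p"
    unfolding Gp_def by (rule one_diff_power_eq)
  have eq: "(1 - fps_X ^ p) ^ n = (Gp p ^ n * Hs) * (1 - fps_X :: rat fps) ^ Suc n"
  proof -
    have "(Gp p ^ n * Hs) * (1 - fps_X :: rat fps) ^ Suc n = ((1 - fps_X) * Gp p) ^ n * ((1 - fps_X) * Hs)"
      by (simp only: power_mult_distrib power_Suc mult_ac)
    also have "\<dots> = (1 - fps_X ^ p) ^ n" by (simp add: Hs_inv one)
    finally show ?thesis by simp
  qed
  have nz: "(1 - fps_X :: rat fps) ^ Suc n \<noteq> 0"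
  proof -
    have "(1 - fps_X :: rat fps) \<noteq> 0"
    proof
      assume "(1 - fps_X :: rat fps) = 0"
      then have "(1 - fps_X :: rat fps) $ 0 = 0" by simp
      then show False by simp
    qed
    then show ?thesis by simp
  qed
  have "(1 - fps_X ^ p) ^ n / (1 - fps_X :: rat fps) ^ Suc n = Gp p ^ n * Hs"
    unfolding eq by (rule nonzero_mult_div_cancel_right[OF nz])
  then show ?thesis by (simp add: rcoef_def)
qed

lemma Rd_AA: "Rd p n d = AA p n n d"
  by (auto simp: Rd_def Md_def AA_def lessThan_Suc)

lemma card_Rd_rcoef: "of_nat (card (Rd p n d)) = rcoef p (Suc n) d"
  using coef_AA[of n n p d] by (simp add: Rd_AA rcoef_eq)



theorem mainTheorem11:
  fixes p m :: nat and z0 :: "nat \<Rightarrow> complex"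
  assumes "p \<ge> 1" and "m \<ge> 1"
    and "(\<Prod>j<m. z0 j) * Rval p m z0 \<noteq> 0"
  shows "regular_sequence m (Mbars p m z0)
         \<and> homog p (Mbar p m z0 (m - 1))
         \<and> (\<forall>f. in_vars m f \<and> f * Mbar p m z0 (m - 1) \<in> gen_ideal m (take (m - 1) (Mbars p m z0))
                \<longrightarrow> f \<in> gen_ideal m (take (m - 1) (Mbars p m z0)))
         \<and> (\<forall>d. of_nat (quot_dim m (gen_ideal m (take (m - 1) (Mbars p m z0))) d) = rcoef p m d)"
proof -
  obtain n where m: "m = Suc n" using assms(2) by (cases m) auto
  have p: "0 < p" using assms(1) by simp
  have R: "Rval p (Suc n) z0 \<noteq> 0" using assms(3) m by simp
  have 1: "regular_sequence m (Mbars p m z0)" using regular[OF p R] m by simp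
  have 2: "homog p (Mbar p m z0 (m - 1))" by (rule homog_Mbar)
  have 3: "\<forall>f. in_vars m f \<and> f * Mbar p m z0 (m - 1) \<in> gen_ideal m (take (m - 1) (Mbars p m z0))
                \<longrightarrow> f \<in> gen_ideal m (take (m - 1) (Mbars p m z0))"
    using reg_step[OF p R, of n] m by simp
  have 4: "\<forall>d. of_nat (quot_dim m (gen_ideal m (take (m - 1) (Mbars p m z0))) d) = rcoef p m d"
  proof
    fix d
    show "of_nat (quot_dim m (gen_ideal m (take (m - 1) (Mbars p m z0))) d) = rcoef p m d"
      using quot_dim_eq[OF p, of n z0 d] card_Rd_rcoef[of p n d] m by simp
  qed
  show ?thesis using 1 2 3 4 by blast
qed

end
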